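(* (a) There exist a Fuchsian group $\Gamma$ and two subsets $F_1, F_2 \subset \mathbb{H}$ with $\mu(F_1) \neq \mu(F_2)$ such that each $F \in \{F_1, F_2\}$ satisfies: (i) $F$ is closed in $\mathbb{H}$; (ii) no two distinct points of the interior $\overset{\circ}{F}$ of $F$ are equivalent under $\Gamma$; (iii) for every $z \in \mathbb{H}$ there exists some $M \in \Gamma$ such that $Mz \in F$; (iv) $F = \overline{\overset{\circ}{F}}$. (b) Likewise, there exist a Fuchsian group $\Gamma$ and two subsets $F_1, F_2 \subset \mathbb{H}$ with $\mu(F_1) \neq \mu(F_2)$ such that each $F \in \{F_1, F_2\}$ satisfies $F = \overline{\overset{\circ}{F}}$ and there exists an open set $G \subset \mathbb{H}$ with: $F = \overline{G}$; no two distinct points of $G$ are equivalent under $\Gamma$; and for every $z \in \mathbb{H}$ there exists some $M \in \Gamma$ with $Mz \in F$.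
   Context: $\mathbb{H} = \{ z \in \mathbb{C} : \mathrm{Im}\, z > 0\}$ is the upper half-plane; closures $\overline{\,\cdot\,}$ and interiors are taken in $\mathbb{H}$. A Fuchsian group is a discrete subgroup $\Gamma$ of $\mathrm{PSL}_2(\mathbb{R})$, acting on $\mathbb{H}$ by $z \mapsto Mz = \frac{az+b}{cz+d}$ for $M = \pm\begin{pmatrix} a & b \\ c & d\end{pmatrix}$. Two points $z, w \in \mathbb{H}$ are equivalent under $\Gamma$ if $w = Mz$ for some $M \in \Gamma$. $\mu$ denotes the hyperbolic area measure on $\mathbb{H}$, $d\mu = y^{-2}\,dx\,dy$ (for $z = x+iy$). *)

theory Defs
  imports "HOL-Analysis.Analysis"
begin

definition uhp :: "complex set" where
  "uhp = {z. Im z > 0}"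

text \<open>Elements of PSL2(R) are represented by matrices in SL2(R); a subgroup of PSL2(R)
  is represented by its full preimage in SL2(R) (a subgroup containing -I).\<close>
definition SL2 :: "(real^2^2) set" where
  "SL2 = {A. det A = 1}"

definition mobius :: "real^2^2 \<Rightarrow> complex \<Rightarrow> complex" where
  "mobius A z = (of_real (A$1$1) * z + of_real (A$1$2)) / (of_real (A$2$1) * z + of_real (A$2$2))"

text \<open>A Fuchsian group: a discrete subgroup of PSL2(R), given via its preimage in SL2(R).
  Discreteness: the identity of PSL2(R) is isolated.\<close>
definition fuchsian :: "(real^2^2) set \<Rightarrow> bool" where
  "fuchsian \<Gamma> \<longleftrightarrow>
     \<Gamma> \<subseteq> SL2 \<and> mat 1 \<in> \<Gamma> \<and>
     (\<forall>A\<in>\<Gamma>. \<forall>B\<in>\<Gamma>. A ** B \<in> \<Gamma>) \<and>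
     (\<forall>A\<in>\<Gamma>. matrix_inv A \<in> \<Gamma>) \<and>
     (\<forall>A\<in>\<Gamma>. - A \<in> \<Gamma>) \<and>
     (\<exists>e>0. \<forall>A\<in>\<Gamma>. norm (A - mat 1) < e \<longrightarrow> A = mat 1 \<or> A = - mat 1)"

definition gequiv :: "(real^2^2) set \<Rightarrow> complex \<Rightarrow> complex \<Rightarrow> bool" where
  "gequiv \<Gamma> z w \<longleftrightarrow> (\<exists>M\<in>\<Gamma>. w = mobius M z)"

definition hyp_measure :: "complex measure" where
  "hyp_measure = density lborel (\<lambda>z. indicator uhp z * ennreal (1 / (Im z)\<^sup>2))"

definition hyp_area :: "complex set \<Rightarrow> ennreal" where
  "hyp_area F = emeasure hyp_measure F"

definition closure_H :: "complex set \<Rightarrow> complex set" where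
  "closure_H S = closure S \<inter> uhp"

definition interior_H :: "complex set \<Rightarrow> complex set" where
  "interior_H S = interior (S \<inter> uhp)"

end

theory Submission
  imports Defs
begin


definition Gam :: "(real^2^2) set" where
  "Gam = {A. det A = 1 \<and> (\<forall>i j. A$i$j \<in> \<int>)}"

lemma mat2_eq: "(A::real^2^2) = B \<longleftrightarrow> A$1$1 = B$1$1 \<and> A$1$2 = B$1$2 \<and> A$2$1 = B$2$1 \<and> A$2$2 = B$2$2"
  by (auto simp: vec_eq_iff forall_2)

lemma mult2: "((A::real^2^2) ** (B::real^2^2))$i$j = A$i$1 * B$1$j + A$i$2 * B$2$j"
  by (simp add: matrix_matrix_mult_def sum_2)

lemma mat1_2: "(mat 1 :: real^2^2)$1$1 = 1" "(mat 1 :: real^2^2)$1$2 = 0"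
   "(mat 1 :: real^2^2)$2$1 = 0" "(mat 1 :: real^2^2)$2$2 = 1"
  by (simp_all add: mat_def)

definition mk2 :: "real \<Rightarrow> real \<Rightarrow> real \<Rightarrow> real \<Rightarrow> real^2^2" where
  "mk2 a b c d = (\<chi> i j. if i = 1 then (if j = 1 then a else b) else (if j = 1 then c else d))"

lemma mk2_nth[simp]: "mk2 a b c d $1$1 = a" "mk2 a b c d $1$2 = b" "mk2 a b c d $2$1 = c" "mk2 a b c d $2$2 = d"
  by (simp_all add: mk2_def)

lemma det_mk2[simp]: "det (mk2 a b c d) = a*d - b*c"
  by (simp add: det_2)

lemma Ints_all2: "(\<forall>i j. (A::real^2^2)$i$j \<in> \<int>) \<longleftrightarrow> A$1$1 \<in> \<int> \<and> A$1$2 \<in> \<int> \<and> A$2$1 \<in> \<int> \<and> A$2$2 \<in> \<int>"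
  by (auto simp: forall_2)

lemma Gam_iff: "A \<in> Gam \<longleftrightarrow> A$1$1 * A$2$2 - A$1$2 * A$2$1 = 1 \<and> A$1$1 \<in> \<int> \<and> A$1$2 \<in> \<int> \<and> A$2$1 \<in> \<int> \<and> A$2$2 \<in> \<int>"
  unfolding Gam_def Ints_all2 by (simp add: det_2)

lemma mk2_in_Gam: "a*d - b*c = 1 \<Longrightarrow> a \<in> \<int> \<Longrightarrow> b \<in> \<int> \<Longrightarrow> c \<in> \<int> \<Longrightarrow> d \<in> \<int> \<Longrightarrow> mk2 a b c d \<in> Gam"
  by (simp add: Gam_iff)

lemma Gam_mult: "A \<in> Gam \<Longrightarrow> B \<in> Gam \<Longrightarrow> A ** B \<in> Gam"
  unfolding Gam_def by (auto simp: det_mul mult2)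

lemma adj_inv:
  fixes A :: "real^2^2"
  assumes "det A = 1"
  shows "A ** mk2 (A$2$2) (-A$1$2) (-A$2$1) (A$1$1) = mat 1"
        "mk2 (A$2$2) (-A$1$2) (-A$2$1) (A$1$1) ** A = mat 1"
  using assms by (auto simp: mat2_eq mult2 mat1_2 det_2 algebra_simps)

lemma matrix_inv_eq:
  fixes A B :: "real^2^2"
  assumes "A ** B = mat 1" "B ** A = mat 1"
  shows "matrix_inv A = B"
proof -
  let ?C = "matrix_inv A"
  have "A ** ?C = mat 1 \<and> ?C ** A = mat 1"
    unfolding matrix_inv_def by (rule someI[of _ B]) (use assms in auto)
  then have "?C = ?C ** (A ** B)" "?C ** A = mat 1" using assms by (auto simp: matrix_mul_rid)
  then show ?thesis by (simp add: matrix_mul_assoc matrix_mul_lid)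
qed

lemma matrix_inv_2:
  fixes A :: "real^2^2"
  assumes "det A = 1"
  shows "matrix_inv A = mk2 (A$2$2) (-A$1$2) (-A$2$1) (A$1$1)"
  using adj_inv[OF assms] by (rule matrix_inv_eq)

lemma Gam_inv: "A \<in> Gam \<Longrightarrow> matrix_inv A \<in> Gam"
  by (auto simp: matrix_inv_2 Gam_def intro!: mk2_in_Gam[unfolded Gam_def, simplified] simp: Ints_all2 det_2 algebra_simps)

lemma Gam_neg: "A \<in> Gam \<Longrightarrow> - A \<in> Gam"
  by (auto simp: Gam_iff)

lemma Gam_one: "mat 1 \<in> Gam"
  by (simp add: Gam_iff mat1_2)

lemma fuchsian_Gam: "fuchsian Gam"
  unfolding fuchsian_def
proof (intro conjI ballI)
  show "Gam \<subseteq> SL2" by (auto simp: Gam_def SL2_def)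
  show "\<exists>e>0. \<forall>A\<in>Gam. norm (A - mat 1) < e \<longrightarrow> A = mat 1 \<or> A = - mat 1"
  proof (intro exI[of _ "1/2"] conjI ballI impI)
    fix A :: "real^2^2" assume A: "A \<in> Gam" and n: "norm (A - mat 1) < 1/2"
    have small: "\<bar>(A - mat 1)$i$j\<bar> < 1/2" for i j
      using Finite_Cartesian_Product.norm_nth_le[where x="A - mat 1" and i=i] Finite_Cartesian_Product.norm_nth_le[where x="(A - mat 1)$i" and i=j] n by auto
    have intz: "\<And>x::real. x \<in> \<int> \<Longrightarrow> \<bar>x\<bar> < 1/2 \<Longrightarrow> x = 0"
      by (auto elim!: Ints_cases)
    have "(A - mat 1)$i$j \<in> \<int>" for i j
      using A by (auto simp: Gam_def mat_def)
    then have "(A - mat 1)$i$j = 0" for i j using small intz by blast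
    then show "A = mat 1 \<or> A = - mat 1" by (auto simp: vec_eq_iff)
  qed simp
qed (auto simp: Gam_one Gam_mult Gam_inv Gam_neg)



lemma den_nz:
  fixes A :: "real^2^2"
  assumes "det A = 1" "Im z > 0"
  shows "of_real (A$2$1) * z + of_real (A$2$2) \<noteq> 0"
proof
  assume h: "of_real (A$2$1) * z + of_real (A$2$2) = 0"
  then have "Im (of_real (A$2$1) * z + of_real (A$2$2)) = 0" by simp
  then have "A$2$1 * Im z = 0" by simp
  then have c: "A$2$1 = 0" using assms by simp
  then have "A$2$2 = 0" using h by simp
  then show False using assms c by (simp add: det_2)
qed

lemma Im_mobius:
  fixes A :: "real^2^2"
  assumes "det A = 1" "Im z > 0"
  shows "Im (mobius A z) = Im z / ((A$2$1 * Re z + A$2$2)\<^sup>2 + (A$2$1 * Im z)\<^sup>2)"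
proof -
  have "det A = A$1$1 * A$2$2 - A$1$2 * A$2$1" by (simp add: det_2)
  then have d: "A$1$1 * A$2$2 - A$1$2 * A$2$1 = 1" using assms by simp
  have e: "Im (of_real (A$1$1) * z + of_real (A$1$2)) * Re (of_real (A$2$1) * z + of_real (A$2$2))
     - Re (of_real (A$1$1) * z + of_real (A$1$2)) * Im (of_real (A$2$1) * z + of_real (A$2$2))
     = (A$1$1 * A$2$2 - A$1$2 * A$2$1) * Im z" by (simp add: algebra_simps)
  show ?thesis unfolding mobius_def Im_divide e d
    by (simp add: power2_eq_square)
qed

lemma den_pos:
  fixes A :: "real^2^2"
  assumes "det A = 1" "Im z > 0"
  shows "(A$2$1 * Re z + A$2$2)\<^sup>2 + (A$2$1 * Im z)\<^sup>2 > 0"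
proof -
  have "A$2$1 \<noteq> 0 \<or> A$2$2 \<noteq> 0" using assms by (auto simp: det_2)
  then show ?thesis using assms(2)
    by (metis add.commute add_0 add_pos_nonneg mult_eq_0_iff not_gr_zero order_less_irrefl sum_power2_gt_zero_iff zero_less_power2)
qed

lemma Im_mobius_pos:
  fixes A :: "real^2^2"
  assumes "det A = 1" "Im z > 0"
  shows "Im (mobius A z) > 0"
  using Im_mobius[OF assms] den_pos[OF assms] assms by simp

lemma mobius_mult:
  fixes A B :: "real^2^2"
  assumes "det A = 1" "det B = 1" "Im z > 0"
  shows "mobius (A ** B) z = mobius A (mobius B z)"
proof -
  have n1: "of_real (B$2$1) * z + of_real (B$2$2) \<noteq> 0" by (rule den_nz[OF assms(2,3)])
  have "Im (mobius B z) > 0" by (rule Im_mobius_pos[OF assms(2,3)])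
  then have n2: "of_real (A$2$1) * mobius B z + of_real (A$2$2) \<noteq> 0" by (rule den_nz[OF assms(1)])
  then have n2': "of_real (A$2$1) * (of_real (B$1$1) * z + of_real (B$1$2)) + of_real (A$2$2) * (of_real (B$2$1) * z + of_real (B$2$2)) \<noteq> 0"
    using n1 unfolding mobius_def by (simp add: field_simps)
  define p where "p = of_real (B$1$1) * z + of_real (B$1$2)"
  define q where "q = of_real (B$2$1) * z + of_real (B$2$2)"
  have q: "q \<noteq> 0" using n1 q_def by simp
  have w: "mobius B z = p / q" unfolding mobius_def p_def q_def ..
  have num: "of_real ((A ** B)$1$1) * z + of_real ((A ** B)$1$2) = of_real (A$1$1) * p + of_real (A$1$2) * q"
    unfolding mult2 p_def q_def by (simp add: algebra_simps)
  have den: "of_real ((A ** B)$2$1) * z + of_real ((A ** B)$2$2) = of_real (A$2$1) * p + of_real (A$2$2) * q"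
    unfolding mult2 p_def q_def by (simp add: algebra_simps)
  have "mobius A (p/q) = (of_real (A$1$1) * p + of_real (A$1$2) * q) / (of_real (A$2$1) * p + of_real (A$2$2) * q)"
  proof -
    have 1: "of_real (A$1$1) * (p/q) + of_real (A$1$2) = (of_real (A$1$1) * p + of_real (A$1$2) * q)/q"
      using q by (simp add: field_simps)
    have 2: "of_real (A$2$1) * (p/q) + of_real (A$2$2) = (of_real (A$2$1) * p + of_real (A$2$2) * q)/q"
      using q by (simp add: field_simps)
    have 3: "(X/q)/(Y/q) = X/Y" for X Y using q by (cases "Y = 0") (simp_all add: field_simps)
    show ?thesis unfolding mobius_def 1 2 3 ..
  qed
  then show ?thesis unfolding w by (simp add: mobius_def num den)
qed

lemma mobius_one: "mobius (mat 1) z = z"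
  by (simp add: mobius_def mat1_2)

definition Tm :: "real \<Rightarrow> real^2^2" where "Tm n = mk2 1 n 0 1"
definition Sm :: "real^2^2" where "Sm = mk2 0 (-1) 1 0"

lemma Tm_Gam: "n \<in> \<int> \<Longrightarrow> Tm n \<in> Gam" by (simp add: Tm_def Gam_iff)
lemma Sm_Gam: "Sm \<in> Gam" by (simp add: Sm_def Gam_iff)
lemma mobius_Tm: "mobius (Tm n) z = z + of_real n" by (simp add: Tm_def mobius_def)
lemma mobius_Sm: "mobius Sm z = - 1 / z" by (simp add: Sm_def mobius_def)

lemma Gam_det: "A \<in> Gam \<Longrightarrow> det A = 1" by (simp add: Gam_def)



definition Dc :: "complex set" where "Dc = {w. \<bar>Re w\<bar> \<le> 1/2 \<and> 1 \<le> cmod w}"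
definition Do :: "complex set" where "Do = {w. \<bar>Re w\<bar> < 1/2 \<and> 1 < cmod w \<and> 0 < Im w}"

lemma finite_Ys:
  assumes y: "Im z > 0"
  shows "finite {Im (mobius M z) | M. M \<in> Gam \<and> Im z \<le> Im (mobius M z)}"
proof -
  define x where "x = Re z"
  define N where "N = ceiling (1 + 1/Im z + \<bar>x\<bar>/Im z)"
  define g where "g = (\<lambda>(c::int,d::int). Im z / ((of_int c * x + of_int d)\<^sup>2 + (of_int c * Im z)\<^sup>2))"
  have "{Im (mobius M z) | M. M \<in> Gam \<and> Im z \<le> Im (mobius M z)} \<subseteq> g ` ({-N..N} \<times> {-N..N})"
  proof safe
    fix M assume M: "M \<in> Gam" and le: "Im z \<le> Im (mobius M z)"
    obtain ci where ci: "M$2$1 = of_int ci" using M by (auto simp: Gam_iff elim!: Ints_cases)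
    obtain di where di: "M$2$2 = of_int di" using M by (auto simp: Gam_iff elim!: Ints_cases)
    have dM: "det M = 1" using M by (rule Gam_det)
    define Q where "Q = (of_int ci * x + of_int di)\<^sup>2 + (of_int ci * Im z)\<^sup>2"
    have Qp: "Q > 0" using den_pos[OF dM y] ci di by (simp add: Q_def x_def)
    have im: "Im (mobius M z) = Im z / Q" using Im_mobius[OF dM y] ci di by (simp add: Q_def x_def)
    have "Im z \<le> Im z / Q" using le im by simp
    then have Q1: "Q \<le> 1" using Qp y by (simp add: le_divide_eq)
    have "(of_int ci * Im z)\<^sup>2 \<le> 1" using Q1 unfolding Q_def by (smt (verit) zero_le_power2)
    then have c1: "\<bar>of_int ci * Im z\<bar> \<le> 1" by (simp add: abs_square_le_1)
    then have c2: "\<bar>real_of_int ci\<bar> \<le> 1 / Im z" using y by (simp add: abs_mult le_divide_eq)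
    have "(of_int ci * x + of_int di)\<^sup>2 \<le> 1" using Q1 unfolding Q_def by (smt (verit) zero_le_power2)
    then have d1: "\<bar>of_int ci * x + of_int di\<bar> \<le> 1" by (simp add: abs_square_le_1)
    have "\<bar>real_of_int ci\<bar> * \<bar>x\<bar> \<le> (1 / Im z) * \<bar>x\<bar>" using mult_right_mono[OF c2, of "\<bar>x\<bar>"] by simp
    then have d2': "\<bar>of_int ci * x\<bar> \<le> (1 / Im z) * \<bar>x\<bar>" by (simp add: abs_mult)
    have d3: "\<bar>real_of_int di\<bar> \<le> \<bar>of_int ci * x + of_int di\<bar> + \<bar>of_int ci * x\<bar>"
      using abs_triangle_ineq4[of "of_int ci * x + of_int di" "of_int ci * x"] by simp
    have "1 / Im z * \<bar>x\<bar> = \<bar>x\<bar> / Im z" by simp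
    then have d2: "\<bar>real_of_int di\<bar> \<le> 1 + \<bar>x\<bar> / Im z" using d1 d2' d3 by linarith
    have "0 \<le> 1 / Im z" "0 \<le> \<bar>x\<bar> / Im z" using y by auto
    then have "\<bar>real_of_int ci\<bar> \<le> real_of_int N" "\<bar>real_of_int di\<bar> \<le> real_of_int N"
      using c2 d2 le_of_int_ceiling[of "1 + 1/Im z + \<bar>x\<bar>/Im z"] unfolding N_def by linarith+
    then have "ci \<in> {-N..N}" "di \<in> {-N..N}" by auto
    moreover have "Im (mobius M z) = g (ci, di)" using im by (simp add: g_def Q_def)
    ultimately show "Im (mobius M z) \<in> g ` ({-N..N} \<times> {-N..N})" by blast
  qed
  then show ?thesis by (rule finite_subset) auto
qed

lemma Im_neg_inv: "Im (- 1 / w) = Im w / (cmod w)\<^sup>2"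
  by (simp add: Im_divide cmod_power2)

lemma covering_Dc:
  assumes y: "Im z > 0"
  shows "\<exists>M\<in>Gam. mobius M z \<in> Dc \<and> Im (mobius M z) > 0"
proof -
  define Y where "Y = {Im (mobius M z) | M. M \<in> Gam \<and> Im z \<le> Im (mobius M z)}"
  have fY: "finite Y" unfolding Y_def by (rule finite_Ys[OF y])
  have "Im z \<in> Y" unfolding Y_def using Gam_one mobius_one[of z] by force
  then have neY: "Y \<noteq> {}" by auto
  have "Max Y \<in> Y" using fY neY by (rule Max_in)
  then obtain M0 where M0: "M0 \<in> Gam" "Im z \<le> Im (mobius M0 z)" "Im (mobius M0 z) = Max Y"
    unfolding Y_def by auto
  have maxY: "Im (mobius M z) \<le> Max Y" if "M \<in> Gam" "Im z \<le> Im (mobius M z)" for M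
    using that fY unfolding Y_def by (intro Max_ge) auto
  define w where "w = mobius M0 z"
  define n where "n = real_of_int (floor (Re w + 1/2))"
  define M1 where "M1 = Tm (-n) ** M0"
  have M1G: "M1 \<in> Gam" unfolding M1_def by (intro Gam_mult Tm_Gam M0) (simp add: n_def)
  have w1: "mobius M1 z = w - of_real n"
    unfolding M1_def w_def using Gam_det[OF Tm_Gam[of "-n"]] Gam_det[OF M0(1)] y
    by (subst mobius_mult) (auto simp: n_def mobius_Tm)
  have imw1: "Im (mobius M1 z) = Im w" using w1 by simp
  have re1: "\<bar>Re (mobius M1 z)\<bar> \<le> 1/2"
  proof -
    have h1: "n \<le> Re w + 1/2" "Re w + 1/2 < n + 1"
      unfolding n_def using of_int_floor_le[of "Re w + 1/2"] real_of_int_floor_add_one_gt[of "Re w + 1/2"] by auto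
    have "Re (mobius M1 z) = Re w - n" by (simp add: w1)
    then show ?thesis using h1 by (simp only: abs_le_iff) linarith
  qed
  have wpos: "Im w > 0" unfolding w_def using Im_mobius_pos[OF Gam_det[OF M0(1)] y] .
  have "1 \<le> cmod (mobius M1 z)"
  proof (rule ccontr)
    assume "\<not> 1 \<le> cmod (mobius M1 z)"
    then have lt: "cmod (mobius M1 z) < 1" by simp
    define u where "u = mobius M1 z"
    have upos: "Im u > 0" using imw1 wpos u_def by simp
    then have "u \<noteq> 0" by auto
    then have cu: "0 < cmod u" by simp
    define M2 where "M2 = Sm ** M1"
    have M2G: "M2 \<in> Gam" unfolding M2_def by (intro Gam_mult Sm_Gam M1G)
    have "mobius M2 z = - 1 / u" unfolding M2_def u_def
      using Gam_det[OF Sm_Gam] Gam_det[OF M1G] y by (subst mobius_mult) (auto simp: mobius_Sm)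
    then have "Im (mobius M2 z) = Im u / (cmod u)\<^sup>2" using Im_neg_inv[of u] by simp
    moreover have "Im u / (cmod u)\<^sup>2 > Im u"
    proof -
      have "(cmod u)\<^sup>2 < 1" using lt cu u_def by (simp add: power_less_one_iff)
      then show ?thesis using upos cu by (simp add: less_divide_eq)
    qed
    ultimately have gt: "Im (mobius M2 z) > Im w" using imw1 u_def by simp
    have "Im z \<le> Im w" using M0 w_def by simp
    then have "Im (mobius M2 z) \<le> Max Y" using gt by (intro maxY M2G) simp
    then show False using gt M0 w_def by simp
  qed
  then show ?thesis using M1G re1 imw1 wpos by (auto simp: Dc_def)
qed



lemma int_sq_ge1: "(c::int) \<noteq> 0 \<Longrightarrow> 1 \<le> (real_of_int c)\<^sup>2"
proof -
  assume "c \<noteq> 0"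
  then have "1 \<le> \<bar>c\<bar>" by simp
  then have "1 \<le> \<bar>real_of_int c\<bar>" by linarith
  then show ?thesis using one_le_power[of "\<bar>real_of_int c\<bar>" 2] by simp
qed

lemma ne_core:
  assumes z: "z \<in> Do" and w: "w \<in> Do" and M: "M \<in> Gam" and wM: "w = mobius M z" and le: "Im z \<le> Im w"
  shows "w = z"
proof -
  define x where "x = Re z"
  define y where "y = Im z"
  have y: "y > 0" using z by (simp add: Do_def y_def)
  obtain ai where ai: "M$1$1 = of_int ai" using M by (auto simp: Gam_iff elim!: Ints_cases)
  obtain bi where bi: "M$1$2 = of_int bi" using M by (auto simp: Gam_iff elim!: Ints_cases)
  obtain ci where ci: "M$2$1 = of_int ci" using M by (auto simp: Gam_iff elim!: Ints_cases)
  obtain di where di: "M$2$2 = of_int di" using M by (auto simp: Gam_iff elim!: Ints_cases)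
  have dM: "det M = 1" using M by (rule Gam_det)
  have "real_of_int (ai * di - bi * ci) = 1" using M ai bi ci di by (simp add: Gam_iff)
  then have det: "ai * di - bi * ci = 1" by linarith
  define Q where "Q = (of_int ci * x + of_int di)\<^sup>2 + (of_int ci * y)\<^sup>2"
  have Qp: "Q > 0" using den_pos[OF dM, of z] y ci di by (simp add: Q_def x_def y_def)
  have im: "Im w = y / Q" using Im_mobius[OF dM, of z] y ci di wM by (simp add: Q_def x_def y_def)
  have "y \<le> y / Q" using le im y_def by simp
  then have Q1: "Q \<le> 1" using Qp y by (simp add: le_divide_eq)
  have x2: "x\<^sup>2 < 1/4"
  proof -
    have "\<bar>x\<bar> < 1/2" using z by (simp add: Do_def x_def)
    then have "\<bar>x\<bar>^2 < (1/2)^2" by (intro power_strict_mono) auto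
    then have "x^2 < (1/2)^2" by (simp only: power2_abs)
    then show ?thesis by (simp add: power_divide)
  qed
  have "1 < (cmod z)\<^sup>2" using z unfolding Do_def by (simp add: one_less_power)
  then have xy: "1 < x\<^sup>2 + y\<^sup>2" by (simp add: cmod_power2 x_def y_def)
  have c0: "ci = 0"
  proof (rule ccontr)
    assume cn: "ci \<noteq> 0"
    have c1: "1 \<le> (real_of_int ci)\<^sup>2" by (rule int_sq_ge1[OF cn])
    have cy: "(of_int ci * y)\<^sup>2 = (real_of_int ci)\<^sup>2 * y\<^sup>2" by (simp add: power_mult_distrib)
    have y34: "y\<^sup>2 > 3/4" using x2 xy by linarith
    have "ci * ci = 1"
    proof (rule ccontr)
      assume "ci * ci \<noteq> 1"
      moreover have "ci * ci \<ge> 1"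
      proof -
        have "0 < ci*ci" using cn by (cases "ci > 0") (auto simp: zero_less_mult_iff)
        then show ?thesis by linarith
      qed
      ultimately have "ci * ci \<ge> 2" by linarith
      then have "real_of_int 2 \<le> real_of_int (ci*ci)" by (simp only: of_int_le_iff)
      then have "(real_of_int ci)\<^sup>2 \<ge> 2" by (simp add: power2_eq_square)
      then have "(real_of_int ci)\<^sup>2 * y\<^sup>2 \<ge> 2 * y\<^sup>2" by (simp add: mult_right_mono)
      then have "(of_int ci * y)\<^sup>2 > 1" using cy y34 by linarith
      then show False using Q1 unfolding Q_def by (smt (verit) zero_le_power2)
    qed
    then have "real_of_int (ci*ci) = 1" by simp
    then have csq: "(real_of_int ci)\<^sup>2 = 1" by (simp add: power2_eq_square)
    have "(of_int ci * x + of_int di)\<^sup>2 + y\<^sup>2 \<le> 1" using Q1 cy csq unfolding Q_def by simp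
    then have lt: "(of_int ci * x + of_int di)\<^sup>2 < x\<^sup>2" using xy by linarith
    define e where "e = ci * di"
    have "(of_int ci * x + of_int di)\<^sup>2 = (real_of_int ci)\<^sup>2 * (x + of_int e)\<^sup>2"
      unfolding e_def using csq by (simp add: power2_eq_square algebra_simps)
    then have lt2: "(x + of_int e)\<^sup>2 < x\<^sup>2" using lt csq by simp
    show False
    proof (cases "e = 0")
      case True then show ?thesis using lt2 by simp
    next
      case False
      then have e1: "1 \<le> \<bar>real_of_int e\<bar>" by linarith
      have ax: "\<bar>x\<bar> < 1/2" using z by (simp add: Do_def x_def)
      have "(x + of_int e)\<^sup>2 = x\<^sup>2 + 2 * x * of_int e + (of_int e)\<^sup>2" by (simp add: power2_eq_square algebra_simps)
      moreover have "\<bar>2 * x * of_int e\<bar> \<le> \<bar>real_of_int e\<bar>"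
      proof -
        have "2 * \<bar>x\<bar> \<le> 1" using ax by simp
        then have "(2 * \<bar>x\<bar>) * \<bar>real_of_int e\<bar> \<le> 1 * \<bar>real_of_int e\<bar>" by (intro mult_right_mono) auto
        then show ?thesis by (simp add: abs_mult)
      qed
      moreover have "\<bar>real_of_int e\<bar> \<le> (of_int e)\<^sup>2"
      proof -
        have "\<bar>real_of_int e\<bar> * 1 \<le> \<bar>real_of_int e\<bar> * \<bar>real_of_int e\<bar>" using e1 by (intro mult_left_mono) auto
        then show ?thesis by (simp add: power2_eq_square abs_mult_self_eq)
      qed
      ultimately show ?thesis using lt2 by (smt (verit))
    qed
  qed
  then have "ai * di = 1" using det by simp
  then have ad: "(ai = 1 \<and> di = 1) \<or> (ai = -1 \<and> di = -1)" by (simp add: zmult_eq_1_iff)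
  have wz: "w = z + of_real (of_int (ai * bi))"
    using ad unfolding wM mobius_def ai bi ci di c0 by (auto simp: field_simps)
  have "\<bar>Re w\<bar> < 1/2" "\<bar>x\<bar> < 1/2" using w z by (auto simp: Do_def x_def)
  moreover have r: "Re w = x + real_of_int (ai*bi)" using wz by (simp add: x_def)
  ultimately have "\<bar>real_of_int (ai * bi)\<bar> < 1" by (simp only: abs_less_iff) linarith
  then have "ai * bi = 0" by linarith
  then show ?thesis using wz by simp
qed

lemma mobius_inv:
  assumes M: "M \<in> Gam" and z: "Im z > 0"
  shows "mobius (matrix_inv M) (mobius M z) = z"
proof -
  have "matrix_inv M ** M = mat 1"
    using adj_inv(2)[OF Gam_det[OF M]] matrix_inv_2[OF Gam_det[OF M]] by simp
  then show ?thesis using mobius_mult[OF Gam_det[OF Gam_inv[OF M]] Gam_det[OF M] z] mobius_one by simp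
qed

lemma ne_Do:
  assumes z: "z \<in> Do" and w: "w \<in> Do" and M: "M \<in> Gam" and wM: "w = mobius M z"
  shows "w = z"
proof (cases "Im z \<le> Im w")
  case True then show ?thesis using ne_core assms by blast
next
  case False
  have "z = mobius (matrix_inv M) w" using mobius_inv[OF M] z wM by (simp add: Do_def)
  then show ?thesis using ne_core[OF w z Gam_inv[OF M]] False by simp
qed



lemma closed_Dc: "closed Dc"
proof -
  have "Dc = {w. \<bar>Re w\<bar> \<le> 1/2} \<inter> {w. 1 \<le> cmod w}" by (auto simp: Dc_def)
  moreover have "closed {w. \<bar>Re w\<bar> \<le> 1/2}" by (intro closed_Collect_le continuous_intros)
  moreover have "closed {w::complex. 1 \<le> cmod w}" by (intro closed_Collect_le continuous_intros)
  ultimately show ?thesis by (metis closed_Int)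
qed

lemma open_uhp: "open uhp"
  unfolding uhp_def using open_halfspace_Im_gt[of 0] by simp

lemma Do_sub: "Do \<subseteq> Dc" "Do \<subseteq> uhp" by (auto simp: Do_def Dc_def uhp_def)

lemma open_Do: "open Do"
proof -
  have "Do = {w. \<bar>Re w\<bar> < 1/2} \<inter> {w. 1 < cmod w} \<inter> {w. 0 < Im w}" by (auto simp: Do_def)
  moreover have "open {w. \<bar>Re w\<bar> < 1/2}" by (intro open_Collect_less continuous_intros)
  moreover have "open {w::complex. 1 < cmod w}" by (intro open_Collect_less continuous_intros)
  moreover have "open {w::complex. 0 < Im w}" by (intro open_Collect_less continuous_intros)
  ultimately show ?thesis by (metis open_Int)
qed

lemma closure_Do: "closure Do \<subseteq> Dc"
  using closed_Dc Do_sub(1) by (simp add: closure_minimal)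

lemma Dc_closure: "Dc \<inter> uhp \<subseteq> closure Do"
proof
  fix z assume z: "z \<in> Dc \<inter> uhp"
  define x where "x = Re z"
  define y where "y = Im z"
  have ax: "\<bar>x\<bar> \<le> 1/2" and y0: "y > 0" using z by (auto simp: Dc_def uhp_def x_def y_def)
  have "1 \<le> (cmod z)\<^sup>2" using z by (auto simp: Dc_def)
  then have xy: "1 \<le> x\<^sup>2 + y\<^sup>2" by (simp add: cmod_power2 x_def y_def)
  have x2: "x\<^sup>2 \<le> 1/4"
  proof -
    have "\<bar>x\<bar>^2 \<le> (1/2)^2" using ax by (intro power_mono) auto
    then show ?thesis by (simp add: power2_abs power_divide)
  qed
  have y12: "y \<ge> 1/2"
  proof (rule ccontr)
    assume "\<not> y \<ge> 1/2"
    then have "y < 1/2" by simp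
    then have "y^2 < (1/2)^2" using y0 by (intro power_strict_mono) auto
    then show False using xy x2 by (simp add: power_divide)
  qed
  show "z \<in> closure Do"
    unfolding closure_approachable
  proof (intro allI impI)
    fix e :: real assume e: "e > 0"
    define t where "t = min (e/2) (1/2)"
    have t0: "t > 0" "t \<le> 1/2" "t \<le> e/2" using e by (auto simp: t_def)
    define w where "w = Complex ((1-t)*x) (y + t)"
    have "dist w z = cmod (w - z)" by (simp add: dist_norm)
    also have "\<dots> \<le> \<bar>Re (w - z)\<bar> + \<bar>Im (w - z)\<bar>" by (rule cmod_le)
    also have "\<dots> = t * \<bar>x\<bar> + t" using t0 by (simp add: w_def x_def y_def algebra_simps abs_mult)
    also have "\<dots> < e"
    proof -
      have "t * \<bar>x\<bar> \<le> t * (1/2)" using ax t0 by (intro mult_left_mono) auto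
      then show ?thesis using t0 e by linarith
    qed
    finally have d: "dist w z < e" .
    have rw: "\<bar>Re w\<bar> < 1/2"
    proof -
      have "\<bar>Re w\<bar> = (1-t) * \<bar>x\<bar>" using t0 by (simp add: w_def abs_mult)
      also have "\<dots> \<le> (1-t) * (1/2)" using ax t0 by (intro mult_left_mono) auto
      also have "\<dots> < 1/2" using t0 by simp
      finally show ?thesis .
    qed
    have "(cmod w)\<^sup>2 = ((1-t)*x)\<^sup>2 + (y+t)\<^sup>2" by (simp add: cmod_power2 w_def)
    also have "\<dots> = x\<^sup>2 + y\<^sup>2 + (2*y*t + t\<^sup>2 - x\<^sup>2 * (2*t - t\<^sup>2))" by (simp add: power2_eq_square algebra_simps)
    finally have cw: "(cmod w)\<^sup>2 = x\<^sup>2 + y\<^sup>2 + (2*y*t + t\<^sup>2 - x\<^sup>2 * (2*t - t\<^sup>2))" .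
    have a1: "x\<^sup>2 * (2*t - t\<^sup>2) \<le> (1/4) * (2*t)"
    proof -
      have "x\<^sup>2 * (2*t - t\<^sup>2) \<le> x\<^sup>2 * (2*t)" using t0 by (intro mult_left_mono) auto
      also have "\<dots> \<le> (1/4) * (2*t)" using x2 t0 by (intro mult_right_mono) auto
      finally show ?thesis .
    qed
    have a2: "2*y*t \<ge> t" using y12 t0 by (simp add: mult_right_mono[of "1/2" y t, simplified] mult.assoc)
    have "t\<^sup>2 \<ge> 0" by simp
    then have "(cmod w)\<^sup>2 > 1" using cw a1 a2 xy t0 by linarith
    then have cw1: "cmod w > 1" by (smt (verit) norm_ge_zero power_le_one)
    have "Im w > 0" using y0 t0 by (simp add: w_def)
    then have "w \<in> Do" using rw cw1 by (simp add: Do_def)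
    then show "\<exists>w\<in>Do. dist w z < e" using d by blast
  qed
qed

lemma interior_Dc: "interior Dc \<inter> uhp \<subseteq> Do"
proof
  fix z assume z: "z \<in> interior Dc \<inter> uhp"
  then obtain e where e: "e > 0" "ball z e \<subseteq> Dc" by (auto simp: mem_interior)
  have zD: "z \<in> Dc" using e by auto
  have r: "\<bar>Re z\<bar> < 1/2"
  proof (cases "Re z \<ge> 0")
    case True
    have "z + of_real (e/2) \<in> ball z e" using e by (simp add: dist_norm)
    then have "z + of_real (e/2) \<in> Dc" using e by blast
    then have "\<bar>Re z + e/2\<bar> \<le> 1/2" by (simp add: Dc_def)
    then show ?thesis using True e by linarith
  next
    case False
    have "z - of_real (e/2) \<in> ball z e" using e by (simp add: dist_norm)
    then have "z - of_real (e/2) \<in> Dc" using e by blast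
    then have "\<bar>Re z - e/2\<bar> \<le> 1/2" by (simp add: Dc_def)
    then show ?thesis using False e by linarith
  qed
  have c1: "1 \<le> cmod z" using zD by (simp add: Dc_def)
  define s where "s = min (e / (2 * cmod z)) (1/2)"
  have cz: "cmod z > 0" using c1 by linarith
  have s0: "s > 0" "s \<le> 1/2" "s * cmod z \<le> e/2" using e cz
    by (auto simp: s_def min_def field_simps)
  have "dist (z * of_real (1 - s)) z = s * cmod z"
  proof -
    have "z * of_real (1 - s) - z = - (of_real s * z)" by (simp add: algebra_simps)
    then show ?thesis using s0 by (simp add: dist_norm norm_mult)
  qed
  then have "z * of_real (1 - s) \<in> ball z e" using s0 e by (simp add: dist_commute)
  then have "z * of_real (1 - s) \<in> Dc" using e by blast
  then have "1 \<le> cmod (z * of_real (1 - s))" by (simp add: Dc_def)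
  moreover have "cmod (z * of_real (1-s)) = cmod z * \<bar>1 - s\<bar>" by (simp only: norm_mult norm_of_real)
  moreover have "\<bar>1 - s\<bar> = 1 - s" using s0 by simp
  ultimately have "1 \<le> (1 - s) * cmod z" by (simp add: mult.commute)
  then have "1 < cmod z" using s0 cz by (smt (verit) mult_le_cancel_right1 mult.commute)
  then show "z \<in> Do" using r z by (simp add: Do_def uhp_def)
qed



definition DD :: "complex set" where
  "DD = (SOME D. countable D \<and> (\<forall>X. open X \<longrightarrow> X \<noteq> {} \<longrightarrow> (\<exists>d\<in>D. d\<in>X)))"
definition qd :: "nat \<Rightarrow> complex" where "qd = from_nat_into DD"
definition rr :: "nat \<Rightarrow> real" where "rr n = (1/4) * (1/2)^n"
definition Bx :: "nat \<Rightarrow> complex set" where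
  "Bx n = box (qd n - Complex (rr n) (rr n)) (qd n + Complex (rr n) (rr n))"
definition U2 :: "complex set" where "U2 = (\<Union>n. Bx n)"
definition B0 :: "complex set" where "B0 = cbox (Complex (-1/4) 2) (Complex (1/4) 3)"
definition K2 :: "complex set" where "K2 = B0 - U2"

lemma DD_prop: "countable DD \<and> (\<forall>X. open X \<longrightarrow> X \<noteq> {} \<longrightarrow> (\<exists>d\<in>DD. d\<in>X))"
proof -
  have "\<exists>D::complex set. countable D \<and> (\<forall>X. open X \<longrightarrow> X \<noteq> {} \<longrightarrow> (\<exists>d\<in>D. d\<in>X))"
    using countable_dense_exists by blast
  then show ?thesis unfolding DD_def by (rule someI_ex)
qed

lemma DD_ne: "DD \<noteq> {}" using DD_prop by (metis empty_iff open_UNIV UNIV_not_empty)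

lemma qd_dense: "open X \<Longrightarrow> X \<noteq> {} \<Longrightarrow> \<exists>n. qd n \<in> X"
proof -
  assume "open X" "X \<noteq> {}"
  then obtain d where "d \<in> DD" "d \<in> X" using DD_prop by blast
  moreover have "range qd = DD" unfolding qd_def using DD_ne DD_prop by simp
  ultimately show ?thesis by (metis rangeE)
qed

lemma rr_pos: "rr n > 0" by (simp add: rr_def)

lemma qd_in_Bx: "qd n \<in> Bx n"
  using rr_pos[of n] by (simp add: Bx_def box_complex_eq)

lemma open_U2: "open U2" unfolding U2_def Bx_def by auto

lemma closed_K2: "closed K2" unfolding K2_def B0_def using open_U2 by (intro closed_Diff) auto

lemma K2_sub: "K2 \<subseteq> B0" by (auto simp: K2_def)

lemma K2_nowhere: "z \<in> K2 \<Longrightarrow> e > 0 \<Longrightarrow> \<exists>u. dist u z < e \<and> u \<notin> K2"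
proof -
  assume "e > 0"
  then obtain n where "qd n \<in> ball z e" using qd_dense[of "ball z e"] by auto
  moreover have "qd n \<in> U2" unfolding U2_def using qd_in_Bx by auto
  ultimately show ?thesis by (auto simp: K2_def dist_commute)
qed

lemma lborel_Bx: "emeasure lborel (Bx n) = ennreal ((1/4) * (1/4)^n)"
proof -
  have "emeasure lborel (Bx n) = ennreal ((2 * rr n) * (2 * rr n))"
    unfolding Bx_def emeasure_lborel_box_eq using rr_pos[of n]
    by (simp add: Basis_complex_def inner_complex_def ennreal_mult)
  also have "(2 * rr n) * (2 * rr n) = (1/4) * (1/4)^n"
    by (simp add: rr_def power_mult_distrib[symmetric] field_simps)
  finally show ?thesis .
qed

lemma lborel_U2: "emeasure lborel U2 \<le> ennreal (1/3)"
proof -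
  have "emeasure lborel U2 \<le> (\<Sum>n. emeasure lborel (Bx n))"
    unfolding U2_def by (rule emeasure_subadditive_countably) (auto simp: Bx_def)
  also have "\<dots> = (\<Sum>n. ennreal ((1/4) * (1/4)^n))" by (simp add: lborel_Bx)
  also have "\<dots> = ennreal (1/3)"
  proof (rule suminf_ennreal_eq)
    have "(\<lambda>n. (1/4::real)^n) sums (1 / (1 - 1/4))" by (rule geometric_sums) simp
    then have "(\<lambda>n. (1/4) * (1/4::real)^n) sums ((1/4) * (1 / (1 - 1/4)))" by (rule sums_mult)
    then show "(\<lambda>n. (1/4) * (1/4::real)^n) sums (1/3)" by simp
  qed simp
  finally show ?thesis .
qed

lemma lborel_B0: "emeasure lborel B0 = ennreal (1/2)"
  unfolding B0_def emeasure_lborel_cbox_eq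
  by (simp add: Basis_complex_def inner_complex_def)

lemma lborel_K2: "emeasure lborel K2 \<noteq> 0"
proof
  assume h: "emeasure lborel K2 = 0"
  have "B0 \<subseteq> K2 \<union> U2" by (auto simp: K2_def)
  then have "emeasure lborel B0 \<le> emeasure lborel (K2 \<union> U2)"
    by (intro emeasure_mono) (auto simp: K2_def B0_def open_U2)
  also have "\<dots> \<le> emeasure lborel K2 + emeasure lborel U2"
    by (intro emeasure_subadditive) (auto simp: K2_def B0_def open_U2 closed_K2[unfolded K2_def B0_def])
  also have "\<dots> \<le> ennreal (1/3)" using h lborel_U2 by simp
  finally have "ennreal (1/2) \<le> ennreal (1/3)" using lborel_B0 by simp
  then have "(1/2::real) \<le> 1/3" by (subst (asm) ennreal_le_iff) simp_all
  then show False by simp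
qed

lemma K2_ne: "K2 \<noteq> {}" using lborel_K2 by auto



definition dK :: "complex \<Rightarrow> real" where "dK z = infdist z K2"
definition Vs :: "complex set" where
  "Vs = {z\<in>Do. 1/8 < dK z} \<union> {z\<in>Do. 0 < dK z \<and> 0 < sin (1 / dK z)}"
definition Ws :: "complex set" where "Ws = Do - closure Vs"
definition W0 :: "complex set" where "W0 = {z\<in>Do. 0 < dK z \<and> dK z < 1/8 \<and> sin (1 / dK z) < 0}"
definition Bp :: "complex set" where "Bp = cbox (Complex (-3/8) (15/8)) (Complex (3/8) (25/8))"

lemma cont_dK: "continuous_on S dK"
  unfolding dK_def by (intro continuous_intros)

lemma open_pos_dK: "open {z. 0 < dK z}"
  by (intro open_Collect_less cont_dK continuous_intros)

lemma open_sin_set: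
  assumes "open T"
  shows "open ({z. 0 < dK z} \<inter> (\<lambda>z. sin (1 / dK z)) -` T)"
proof (rule continuous_open_preimage[OF _ open_pos_dK assms])
  show "continuous_on {z. 0 < dK z} (\<lambda>z. sin (1 / dK z))"
    by (intro continuous_intros cont_dK) auto
qed

lemma open_Vs: "open Vs"
proof -
  have "Vs = (Do \<inter> {z. 1/8 < dK z}) \<union> (Do \<inter> ({z. 0 < dK z} \<inter> (\<lambda>z. sin (1 / dK z)) -` {0<..}))"
    by (auto simp: Vs_def)
  moreover have "open {z. 1/8 < dK z}" by (intro open_Collect_less cont_dK continuous_intros)
  ultimately show ?thesis using open_Do open_sin_set[of "{0<..}"] by (metis open_Int open_Un open_greaterThan)
qed

lemma open_W0: "open W0"
proof -
  have "W0 = Do \<inter> {z. dK z < 1/8} \<inter> ({z. 0 < dK z} \<inter> (\<lambda>z. sin (1 / dK z)) -` {..<0})"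
    by (auto simp: W0_def)
  moreover have "open {z. dK z < 1/8}" by (intro open_Collect_less cont_dK continuous_intros)
  ultimately show ?thesis using open_Do open_sin_set[of "{..<0}"] by (metis open_Int open_lessThan)
qed

lemma open_Ws: "open Ws" unfolding Ws_def using open_Do by (intro open_Diff) auto

lemma Vs_sub: "Vs \<subseteq> Do" by (auto simp: Vs_def)
lemma Ws_sub: "Ws \<subseteq> Do" by (auto simp: Ws_def)
lemma Do_sub_VW: "Do \<subseteq> closure Vs \<union> Ws" by (auto simp: Ws_def)
lemma Ws_closure_Vs: "Ws \<inter> closure Vs = {}" by (auto simp: Ws_def)

lemma W0_sub: "W0 \<subseteq> Ws"
proof -
  have "W0 \<inter> Vs = {}" by (auto simp: W0_def Vs_def)
  then have "W0 \<inter> closure Vs = {}" using open_W0 by (simp add: open_Int_closure_eq_empty)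
  then show ?thesis by (auto simp: Ws_def W0_def)
qed

lemma closure_Ws: "closure Ws \<subseteq> {z. dK z \<le> 1/8}"
proof (rule closure_minimal)
  show "Ws \<subseteq> {z. dK z \<le> 1/8}"
  proof
    fix z assume z: "z \<in> Ws"
    show "z \<in> {z. dK z \<le> 1/8}"
    proof (rule ccontr)
      assume "z \<notin> {z. dK z \<le> 1/8}"
      then have "z \<in> Vs" using z Ws_sub by (auto simp: Vs_def)
      then show False using z closure_subset[of Vs] by (auto simp: Ws_def)
    qed
  qed
  show "closed {z. dK z \<le> 1/8}" by (intro closed_Collect_le cont_dK continuous_intros)
qed

lemma dK_small_Bp: "dK z \<le> 1/8 \<Longrightarrow> z \<in> Bp"
proof -
  assume h: "dK z \<le> 1/8"
  obtain k where k: "k \<in> K2" "infdist z K2 = dist z k" using infdist_attains_inf[OF closed_K2 K2_ne] by blast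
  have kB: "k \<in> B0" using k K2_sub by auto
  have dz: "cmod (z - k) \<le> 1/8" using h k by (simp add: dK_def dist_norm)
  have "\<bar>Re (z - k)\<bar> \<le> 1/8" "\<bar>Im (z - k)\<bar> \<le> 1/8"
    using dz abs_Re_le_cmod[of "z-k"] abs_Im_le_cmod[of "z-k"] by linarith+
  then have "\<bar>Re z - Re k\<bar> \<le> 1/8" "\<bar>Im z - Im k\<bar> \<le> 1/8" by simp_all
  then have i: "Re z - Re k \<le> 1/8" "Re k - Re z \<le> 1/8" "Im z - Im k \<le> 1/8" "Im k - Im z \<le> 1/8"
    using abs_le_iff[of "Re z - Re k" "1/8"] abs_le_iff[of "Im z - Im k" "1/8"] by linarith+
  have j: "-1/4 \<le> Re k" "Re k \<le> 1/4" "2 \<le> Im k" "Im k \<le> 3" using kB by (auto simp: B0_def cbox_complex_eq)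
  show ?thesis unfolding Bp_def cbox_complex_eq using i j by simp
qed

lemma Bp_sub: "Bp \<subseteq> Do"
proof
  fix z assume z: "z \<in> Bp"
  then have "\<bar>Re z\<bar> < 1/2" "Im z \<ge> 15/8" by (auto simp: Bp_def cbox_complex_eq)
  moreover have "\<bar>Im z\<bar> \<le> cmod z" by (rule abs_Im_le_cmod)
  ultimately show "z \<in> Do" by (auto simp: Do_def)
qed

lemma closure_Ws_Bp: "closure Ws \<subseteq> Bp" using closure_Ws dK_small_Bp by auto

lemma approach:
  assumes k: "k \<in> K2" and e: "e > 0"
  shows "\<exists>\<eta>>0. \<forall>\<tau>. 0 < \<tau> \<and> \<tau> < \<eta> \<longrightarrow> (\<exists>p\<in>Do. dist p k < e \<and> dK p = \<tau>)"
proof -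
  have "k \<in> Do" using k K2_sub dK_small_Bp Bp_sub infdist_zero[of k K2] by (auto simp: dK_def)
  then obtain r where r: "r > 0" "ball k r \<subseteq> Do" using open_Do by (meson open_contains_ball)
  define e' where "e' = min e r"
  have e'0: "e' > 0" using e r by (simp add: e'_def)
  obtain u where u: "dist u k < e'" "u \<notin> K2" using K2_nowhere[OF k e'0] by blast
  define \<eta> where "\<eta> = dK u"
  have \<eta>0: "\<eta> > 0" unfolding \<eta>_def dK_def by (rule infdist_pos_not_in_closed[OF closed_K2 K2_ne u(2)])
  show ?thesis
  proof (intro exI[of _ \<eta>] conjI allI impI)
    fix \<tau> assume t: "0 < \<tau> \<and> \<tau> < \<eta>"
    define f where "f = (\<lambda>t::real. dK (k + of_real t * (u - k)))"
    have f0: "f 0 = 0" using k by (simp add: f_def dK_def)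
    have f1: "f 1 = \<eta>" by (simp add: f_def \<eta>_def)
    have cf: "continuous_on {0..1} f" unfolding f_def dK_def by (intro continuous_intros)
    obtain t0 where t0: "0 \<le> t0" "t0 \<le> 1" "f t0 = \<tau>"
      using IVT'[of f 0 \<tau> 1, OF _ _ _ cf] f0 f1 t by auto
    define p where "p = k + of_real t0 * (u - k)"
    have "dist p k = t0 * dist u k" using t0 by (simp add: p_def dist_norm norm_mult)
    also have "\<dots> \<le> dist u k" using t0 by (simp add: mult_left_le_one_le)
    finally have dp: "dist p k < e'" using u by simp
    then have "p \<in> Do" using r by (auto simp: e'_def dist_commute)
    then show "\<exists>p\<in>Do. dist p k < e \<and> dK p = \<tau>" using dp t0 by (auto simp: e'_def p_def f_def)
  qed (rule \<eta>0)
qed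

lemma sin_pos_small: "(\<eta>::real) > 0 \<Longrightarrow> \<exists>\<tau>. 0 < \<tau> \<and> \<tau> < \<eta> \<and> sin (1/\<tau>) = 1"
proof -
  assume h: "\<eta> > 0"
  obtain n :: nat where n: "1/\<eta> < real n" using reals_Archimedean2 by blast
  define a where "a = 2 * real n * pi + pi/2"
  have "real n * 1 \<le> real n * (2 * pi)" using pi_gt3 by (intro mult_left_mono) auto
  then have "real n \<le> 2 * real n * pi" by (simp add: mult.assoc)
  then have a: "1/\<eta> < a" "a > 0" using n pi_gt3 by (auto simp: a_def)
  have s: "sin a = 1" by (simp add: a_def sin_add)
  have "1/a < \<eta>" using a h by (simp add: divide_less_eq field_simps)
  then show ?thesis using a s by (intro exI[of _ "1/a"]) auto
qed

lemma sin_neg_small: "(\<eta>::real) > 0 \<Longrightarrow> \<exists>\<tau>. 0 < \<tau> \<and> \<tau> < \<eta> \<and> sin (1/\<tau>) = -1"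
proof -
  assume h: "\<eta> > 0"
  obtain n :: nat where n: "1/\<eta> < real n" using reals_Archimedean2 by blast
  define a where "a = 2 * real n * pi + 3/2*pi"
  have "real n * 1 \<le> real n * (2 * pi)" using pi_gt3 by (intro mult_left_mono) auto
  then have "real n \<le> 2 * real n * pi" by (simp add: mult.assoc)
  then have a: "1/\<eta> < a" "a > 0" using n pi_gt3 by (auto simp: a_def)
  have s: "sin a = -1" using sin_3over2_pi by (simp add: a_def sin_add)
  have "1/a < \<eta>" using a h by (simp add: divide_less_eq field_simps)
  then show ?thesis using a s by (intro exI[of _ "1/a"]) auto
qed

lemma K2_closure_V: "K2 \<subseteq> closure Vs \<inter> closure Ws"
proof
  fix k assume k: "k \<in> K2"
  have "k \<in> closure Vs \<and> k \<in> closure W0"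
    unfolding closure_approachable
  proof (intro conjI allI impI)
    fix e :: real assume e: "e > 0"
    obtain \<eta> where \<eta>: "\<eta> > 0" "\<And>\<tau>. 0 < \<tau> \<and> \<tau> < \<eta> \<Longrightarrow> \<exists>p\<in>Do. dist p k < e \<and> dK p = \<tau>"
      using approach[OF k e] by blast
    obtain \<tau> where t: "0 < \<tau>" "\<tau> < min \<eta> (1/8)" "sin (1/\<tau>) = 1" using sin_pos_small[of "min \<eta> (1/8)"] \<eta> by auto
    obtain p where p: "p \<in> Do" "dist p k < e" "dK p = \<tau>" using \<eta>(2)[of \<tau>] t by auto
    have "p \<in> Vs" using p t by (auto simp: Vs_def)
    then show "\<exists>y\<in>Vs. dist y k < e" using p by blast
  next
    fix e :: real assume e: "e > 0"
    obtain \<eta> where \<eta>: "\<eta> > 0" "\<And>\<tau>. 0 < \<tau> \<and> \<tau> < \<eta> \<Longrightarrow> \<exists>p\<in>Do. dist p k < e \<and> dK p = \<tau>"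
      using approach[OF k e] by blast
    obtain \<tau> where t: "0 < \<tau>" "\<tau> < min \<eta> (1/8)" "sin (1/\<tau>) = -1" using sin_neg_small[of "min \<eta> (1/8)"] \<eta> by auto
    obtain p where p: "p \<in> Do" "dist p k < e" "dK p = \<tau>" using \<eta>(2)[of \<tau>] t by auto
    have "p \<in> W0" using p t by (auto simp: W0_def)
    then show "\<exists>y\<in>W0. dist y k < e" using p by blast
  qed
  then show "k \<in> closure Vs \<inter> closure Ws" using closure_mono[OF W0_sub] by auto
qed



definition hf :: "complex \<Rightarrow> ennreal" where
  "hf z = indicator uhp z * ennreal (1 / (Im z)\<^sup>2)"

lemma uhp_borel[measurable]: "uhp \<in> sets borel"
  using open_uhp by (rule borel_open)

lemma hf_meas[measurable]: "hf \<in> borel_measurable borel"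
  unfolding hf_def by measurable

lemma hyp_area_eq: "A \<in> sets borel \<Longrightarrow> hyp_area A = (\<integral>\<^sup>+ z. hf z * indicator A z \<partial>lborel)"
  unfolding hyp_area_def hyp_measure_def hf_def[symmetric]
  by (rule emeasure_density) auto

lemma hyp_area_upper:
  assumes A: "A \<in> sets borel" and sub: "A \<subseteq> {z. a \<le> Im z}" and a: "a > 0"
  shows "hyp_area A \<le> ennreal (1 / a\<^sup>2) * emeasure lborel A"
proof -
  have "hyp_area A = (\<integral>\<^sup>+ z. hf z * indicator A z \<partial>lborel)" by (rule hyp_area_eq[OF A])
  also have "\<dots> \<le> (\<integral>\<^sup>+ z. ennreal (1 / a\<^sup>2) * indicator A z \<partial>lborel)"
  proof (rule nn_integral_mono)
    fix z
    show "hf z * indicator A z \<le> ennreal (1 / a\<^sup>2) * indicator A z"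
    proof (cases "z \<in> A")
      case True
      then have za: "a \<le> Im z" using sub by auto
      then have "a\<^sup>2 \<le> (Im z)\<^sup>2" using a by (intro power_mono) auto
      have "Im z > 0" using za a by linarith
      then have "0 < (Im z)\<^sup>2 * a\<^sup>2" using a by simp
      then have "1 / (Im z)\<^sup>2 \<le> 1 / a\<^sup>2" using \<open>a\<^sup>2 \<le> (Im z)\<^sup>2\<close> by (intro divide_left_mono) auto
      then have "ennreal (1 / (Im z)\<^sup>2) \<le> ennreal (1 / a\<^sup>2)" by (rule ennreal_leI)
      then show ?thesis using True by (auto simp: hf_def indicator_def)
    qed simp
  qed
  also have "\<dots> = ennreal (1 / a\<^sup>2) * emeasure lborel A"
    using A by (intro nn_integral_cmult_indicator) simp
  finally show ?thesis .
qed

lemma hyp_area_lower: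
  assumes A: "A \<in> sets borel" and sub: "A \<subseteq> {z. 0 < Im z \<and> Im z \<le> b}"
  shows "ennreal (1 / b\<^sup>2) * emeasure lborel A \<le> hyp_area A"
proof -
  have "ennreal (1 / b\<^sup>2) * emeasure lborel A = (\<integral>\<^sup>+ z. ennreal (1 / b\<^sup>2) * indicator A z \<partial>lborel)"
    using A by (intro nn_integral_cmult_indicator[symmetric]) simp
  also have "\<dots> \<le> (\<integral>\<^sup>+ z. hf z * indicator A z \<partial>lborel)"
  proof (rule nn_integral_mono)
    fix z
    show "ennreal (1 / b\<^sup>2) * indicator A z \<le> hf z * indicator A z"
    proof (cases "z \<in> A")
      case True
      then have zb: "0 < Im z" "Im z \<le> b" using sub by auto
      then have "(Im z)\<^sup>2 \<le> b\<^sup>2" by (intro power_mono) auto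
      moreover have "0 < b\<^sup>2 * (Im z)\<^sup>2" using zb by simp
      ultimately have "1 / b\<^sup>2 \<le> 1 / (Im z)\<^sup>2" by (intro divide_left_mono) auto
      then have "ennreal (1 / b\<^sup>2) \<le> ennreal (1 / (Im z)\<^sup>2)" by (rule ennreal_leI)
      then show ?thesis using True zb by (auto simp: hf_def indicator_def uhp_def)
    qed simp
  qed
  also have "\<dots> = hyp_area A" by (rule hyp_area_eq[OF A, symmetric])
  finally show ?thesis .
qed

lemma hyp_area_transl:
  assumes A: "A \<in> sets borel" and TA: "(\<lambda>z. 1 + z) ` A \<in> sets borel"
  shows "hyp_area ((\<lambda>z. 1 + z) ` A) = hyp_area A"
proof -
  have "hyp_area ((\<lambda>z. 1 + z) ` A) = (\<integral>\<^sup>+ z. hf z * indicator ((\<lambda>z. 1 + z) ` A) z \<partial>lborel)"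
    by (rule hyp_area_eq[OF TA])
  also have "\<dots> = (\<integral>\<^sup>+ z. hf z * indicator ((\<lambda>z. 1 + z) ` A) z \<partial>(distr lborel borel ((+) 1)))"
    by (simp add: lborel_distr_plus)
  also have "\<dots> = (\<integral>\<^sup>+ z. hf (1 + z) * indicator ((\<lambda>z. 1 + z) ` A) (1 + z) \<partial>lborel)"
    using TA by (intro nn_integral_distr) auto
  also have "\<dots> = (\<integral>\<^sup>+ z. hf z * indicator A z \<partial>lborel)"
  proof (rule nn_integral_cong)
    fix z :: complex
    have "hf (1 + z) = hf z" by (simp add: hf_def uhp_def indicator_def)
    moreover have "indicator ((\<lambda>z. 1 + z) ` A) (1 + z) = (indicator A z :: ennreal)"
      by (auto simp: indicator_def)
    ultimately show "hf (1 + z) * indicator ((\<lambda>z. 1 + z) ` A) (1 + z) = hf z * indicator A z" by simp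
  qed
  also have "\<dots> = hyp_area A" by (rule hyp_area_eq[OF A, symmetric])
  finally show ?thesis .
qed

lemma Dc_Im: "z \<in> Dc \<Longrightarrow> z \<in> uhp \<Longrightarrow> Im z \<ge> 1/2"
proof -
  assume z: "z \<in> Dc" "z \<in> uhp"
  define x where "x = Re z"
  define y where "y = Im z"
  have ax: "\<bar>x\<bar> \<le> 1/2" and y0: "y > 0" using z by (auto simp: Dc_def uhp_def x_def y_def)
  have "1 \<le> (cmod z)\<^sup>2" using z by (auto simp: Dc_def)
  then have xy: "1 \<le> x\<^sup>2 + y\<^sup>2" by (simp add: cmod_power2 x_def y_def)
  have x2: "x\<^sup>2 \<le> 1/4"
  proof -
    have "\<bar>x\<bar>^2 \<le> (1/2)^2" using ax by (intro power_mono) auto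
    then show ?thesis by (simp add: power2_abs power_divide)
  qed
  show "Im z \<ge> 1/2"
  proof (rule ccontr)
    assume "\<not> Im z \<ge> 1/2"
    then have "y < 1/2" by (simp add: y_def)
    then have "y^2 < (1/2)^2" using y0 by (intro power_strict_mono) auto
    then show False using xy x2 by (simp add: power_divide)
  qed
qed

definition An :: "nat \<Rightarrow> complex set" where
  "An n = cbox (Complex (-1/2) ((real n + 1)/2)) (Complex (1/2) ((real n + 2)/2))"

lemma Dc_cover: "Dc \<inter> uhp \<subseteq> (\<Union>n. An n)"
proof
  fix z assume z: "z \<in> Dc \<inter> uhp"
  have y: "Im z \<ge> 1/2" using Dc_Im z by auto
  define m where "m = floor (2 * Im z)"
  have m1: "m \<ge> 1" using y by (simp add: m_def le_floor_iff)
  define n where "n = nat m - 1"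
  have nm: "real n + 1 = real_of_int m" using m1 by (simp add: n_def of_nat_diff)
  have "real_of_int m \<le> 2 * Im z" "2 * Im z < real_of_int m + 1"
    unfolding m_def by linarith+
  then have "real n + 1 \<le> 2 * Im z" "2 * Im z \<le> real n + 2" using nm by linarith+
  then have "(real n + 1)/2 \<le> Im z" "Im z \<le> (real n + 2)/2" by (simp_all add: divide_le_eq le_divide_eq)
  moreover have "\<bar>Re z\<bar> \<le> 1/2" using z by (simp add: Dc_def)
  ultimately have "z \<in> An n" by (auto simp: An_def cbox_complex_eq abs_le_iff)
  then show "z \<in> (\<Union>n. An n)" by blast
qed

lemma hyp_An: "hyp_area (An n) \<le> ennreal (2 / (real n + 1)\<^sup>2)"
proof -
  have "hyp_area (An n) \<le> ennreal (1 / ((real n + 1)/2)\<^sup>2) * emeasure lborel (An n)"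
    by (rule hyp_area_upper) (auto simp: An_def cbox_complex_eq)
  also have "emeasure lborel (An n) = ennreal (1/2)"
    unfolding An_def emeasure_lborel_cbox_eq by (simp add: Basis_complex_def inner_complex_def field_simps)
  also have "ennreal (1 / ((real n + 1)/2)\<^sup>2) * ennreal (1/2) = ennreal (2 / (real n + 1)\<^sup>2)"
  proof -
    have "ennreal (1 / ((real n + 1)/2)\<^sup>2) * ennreal (1/2) = ennreal (1 / ((real n + 1)/2)\<^sup>2 * (1/2))"
      by (rule ennreal_mult[symmetric]) auto
    also have "1 / ((real n + 1)/2)\<^sup>2 * (1/2) = 2 / (real n + 1)\<^sup>2"
      by (simp add: power_divide field_simps)
    finally show ?thesis .
  qed
  finally show ?thesis .
qed

lemma hyp_Dc_finite: "hyp_area (Dc \<inter> uhp) < \<infinity>"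
proof -
  have "hyp_area (Dc \<inter> uhp) \<le> hyp_area (\<Union>n. An n)"
    unfolding hyp_area_def using Dc_cover
    by (intro emeasure_mono) (auto simp: hyp_measure_def An_def)
  also have "\<dots> \<le> (\<Sum>n. hyp_area (An n))"
    unfolding hyp_area_def by (rule emeasure_subadditive_countably) (auto simp: hyp_measure_def An_def)
  also have "\<dots> \<le> (\<Sum>n. ennreal (2 / (real n + 1)\<^sup>2))"
    by (intro suminf_le hyp_An summableI)
  also have "\<dots> < \<infinity>"
  proof -
    have "summable (\<lambda>n. inverse (real (Suc n) ^ 2))"
      by (subst summable_Suc_iff) (rule inverse_power_summable, simp)
    then have "summable (\<lambda>n. 2 * inverse (real (Suc n) ^ 2))" by (rule summable_mult)
    then have "summable (\<lambda>n. 2 / (real n + 1)\<^sup>2)" by (simp add: divide_inverse add.commute)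
    then have "(\<Sum>n. ennreal (2 / (real n + 1)\<^sup>2)) \<noteq> top" by (rule ennreal_suminf_neq_top) simp
    then show ?thesis by (simp add: less_top)
  qed
  finally show ?thesis .
qed

lemma hyp_K2_pos: "hyp_area K2 > 0"
proof -
  have "ennreal (1 / 3\<^sup>2) * emeasure lborel K2 \<le> hyp_area K2"
    using K2_sub by (intro hyp_area_lower) (auto simp: closed_K2 B0_def cbox_complex_eq)
  moreover have "ennreal (1 / 3\<^sup>2) * emeasure lborel K2 \<noteq> 0" using lborel_K2 by simp
  then have "0 < ennreal (1 / 3\<^sup>2) * emeasure lborel K2" using not_gr_zero by blast
  ultimately show ?thesis using less_le_trans by blast
qed



definition FF1 :: "complex set" where "FF1 = closure_H Do"
definition GG2 :: "complex set" where "GG2 = Vs \<union> (+) 1 ` Ws"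
definition FF2 :: "complex set" where "FF2 = closure_H GG2"

lemma reg_props:
  assumes G: "open G" "G \<subseteq> uhp"
  shows "closure_H G \<subseteq> uhp" "closedin (top_of_set uhp) (closure_H G)"
        "interior_H (closure_H G) = interior (closure G) \<inter> uhp"
        "closure_H (interior_H (closure_H G)) = closure_H G"
proof -
  show "closure_H G \<subseteq> uhp" by (auto simp: closure_H_def)
  show "closedin (top_of_set uhp) (closure_H G)"
    unfolding closure_H_def closedin_closed by (intro exI[of _ "closure G"]) auto
  show i: "interior_H (closure_H G) = interior (closure G) \<inter> uhp"
    unfolding interior_H_def closure_H_def using open_uhp by (simp add: interior_Int interior_open)
  have "G \<subseteq> interior (closure G)" using G closure_subset by (intro interior_maximal) auto
  then have "G \<subseteq> interior (closure G) \<inter> uhp" using G by auto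
  then have a: "closure G \<subseteq> closure (interior (closure G) \<inter> uhp)" by (rule closure_mono)
  have "interior (closure G) \<inter> uhp \<subseteq> closure G" using interior_subset by auto
  then have b: "closure (interior (closure G) \<inter> uhp) \<subseteq> closure G" by (simp add: closure_minimal)
  show "closure_H (interior_H (closure_H G)) = closure_H G"
    unfolding i unfolding closure_H_def using a b by auto
qed

lemma Tm_mult_left: "M \<in> Gam \<Longrightarrow> Im z > 0 \<Longrightarrow> n \<in> \<int> \<Longrightarrow> mobius (Tm n ** M) z = mobius M z + of_real n"
  using mobius_mult[OF Gam_det[OF Tm_Gam] Gam_det] mobius_Tm by simp

lemma Tm_mult_right: "M \<in> Gam \<Longrightarrow> Im z > 0 \<Longrightarrow> n \<in> \<int> \<Longrightarrow> mobius (M ** Tm n) z = mobius M (z + of_real n)"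
  using mobius_mult[OF Gam_det Gam_det[OF Tm_Gam]] mobius_Tm by simp

lemma int_Un_closed:
  assumes "closed A" "closed B" "A \<inter> B = {}"
  shows "interior (A \<union> B) \<subseteq> interior A \<union> interior B"
proof
  fix z assume z: "z \<in> interior (A \<union> B)"
  then obtain S where S: "open S" "z \<in> S" "S \<subseteq> A \<union> B" by (meson interiorE)
  have zAB: "z \<in> A \<union> B" using S by auto
  show "z \<in> interior A \<union> interior B"
  proof (cases "z \<in> A")
    case True
    then have "z \<notin> B" using assms by auto
    then have "z \<in> interior A" using S assms by (intro interiorI[of "S - B"]) auto
    then show ?thesis by simp
  next
    case False
    then have "z \<in> interior B" using S assms zAB by (intro interiorI[of "S - A"]) auto
    then show ?thesis by simp
  qed
qed

lemma Dc_TBp: "Dc \<inter> (+) 1 ` Bp = {}"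
  by (auto simp: Dc_def Bp_def cbox_complex_eq)

lemma F1_good:
  "FF1 \<subseteq> uhp \<and> closedin (top_of_set uhp) FF1 \<and>
   (\<forall>z\<in>interior_H FF1. \<forall>w\<in>interior_H FF1. z \<noteq> w \<longrightarrow> \<not> gequiv Gam z w) \<and>
   (\<forall>z\<in>uhp. \<exists>M\<in>Gam. mobius M z \<in> FF1) \<and> FF1 = closure_H (interior_H FF1)"
proof (intro conjI)
  note r = reg_props[OF open_Do Do_sub(2)]
  show "FF1 \<subseteq> uhp" unfolding FF1_def by (rule r(1))
  show "closedin (top_of_set uhp) FF1" unfolding FF1_def by (rule r(2))
  show "FF1 = closure_H (interior_H FF1)" unfolding FF1_def by (rule r(4)[symmetric])
  have "interior_H FF1 \<subseteq> Do"
  proof -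
    have "interior (closure Do) \<subseteq> interior Dc" by (rule interior_mono[OF closure_Do])
    then show ?thesis unfolding FF1_def r(3) using interior_Dc by auto
  qed
  then show "\<forall>z\<in>interior_H FF1. \<forall>w\<in>interior_H FF1. z \<noteq> w \<longrightarrow> \<not> gequiv Gam z w"
  proof (intro ballI impI notI)
    fix z w assume I: "interior_H FF1 \<subseteq> Do" and z: "z \<in> interior_H FF1" and w: "w \<in> interior_H FF1"
      and ne: "z \<noteq> w" and g: "gequiv Gam z w"
    obtain M where "M \<in> Gam" "w = mobius M z" using g by (auto simp: gequiv_def)
    then have "w = z" using ne_Do[of z w M] I z w by blast
    then show False using ne by simp
  qed
  show "\<forall>z\<in>uhp. \<exists>M\<in>Gam. mobius M z \<in> FF1"
  proof
    fix z assume "z \<in> uhp"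
    then obtain M where M: "M \<in> Gam" "mobius M z \<in> Dc" "Im (mobius M z) > 0"
      using covering_Dc by (auto simp: uhp_def)
    then have "mobius M z \<in> closure Do \<inter> uhp" using Dc_closure by (auto simp: uhp_def)
    then show "\<exists>M\<in>Gam. mobius M z \<in> FF1" using M by (auto simp: FF1_def closure_H_def)
  qed
qed

lemma GG2_props: "open GG2" "GG2 \<subseteq> uhp"
proof -
  show "open GG2" unfolding GG2_def using open_Vs open_Ws by (intro open_Un open_translation) auto
  have "(+) 1 ` Ws \<subseteq> (+) 1 ` Bp" using closure_Ws_Bp closure_subset by auto
  moreover have "(+) 1 ` Bp \<subseteq> uhp" by (auto simp: Bp_def cbox_complex_eq uhp_def)
  ultimately show "GG2 \<subseteq> uhp" unfolding GG2_def using Vs_sub Do_sub(2) by auto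
qed

lemma closure_G2: "closure GG2 = closure Vs \<union> (+) 1 ` closure Ws"
  unfolding GG2_def by (simp add: closure_translation)

lemma closure_Vs_Dc: "closure Vs \<subseteq> Dc"
  using closure_mono[OF Vs_sub] closure_Do by auto

lemma TclWs_uhp: "(+) 1 ` closure Ws \<subseteq> uhp"
  using closure_Ws_Bp by (force simp: Bp_def cbox_complex_eq uhp_def)

lemma F2_good:
  "FF2 \<subseteq> uhp \<and> closedin (top_of_set uhp) FF2 \<and>
   (\<forall>z\<in>interior_H FF2. \<forall>w\<in>interior_H FF2. z \<noteq> w \<longrightarrow> \<not> gequiv Gam z w) \<and>
   (\<forall>z\<in>uhp. \<exists>M\<in>Gam. mobius M z \<in> FF2) \<and> FF2 = closure_H (interior_H FF2)"
proof (intro conjI)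
  note r = reg_props[OF GG2_props]
  show "FF2 \<subseteq> uhp" unfolding FF2_def by (rule r(1))
  show "closedin (top_of_set uhp) FF2" unfolding FF2_def by (rule r(2))
  show "FF2 = closure_H (interior_H FF2)" unfolding FF2_def by (rule r(4)[symmetric])
  define Y1 where "Y1 = interior (closure Vs) \<inter> uhp"
  define Y2 where "Y2 = interior (closure Ws)"
  have Y1D: "Y1 \<subseteq> Do" unfolding Y1_def using interior_mono[OF closure_Vs_Dc] interior_Dc by auto
  have Y2D: "Y2 \<subseteq> Do" unfolding Y2_def using interior_subset closure_Ws_Bp Bp_sub by blast
  have Y12: "Y1 \<inter> Y2 = {}"
  proof -
    have "interior (closure Vs) \<inter> Ws = {}" using Ws_closure_Vs interior_subset by blast
    then have "interior (closure Vs) \<inter> closure Ws = {}" by (simp add: open_Int_closure_eq_empty)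
    then show ?thesis unfolding Y1_def Y2_def using interior_subset by blast
  qed
  have E: "interior_H FF2 \<subseteq> Y1 \<union> (+) 1 ` Y2"
  proof -
    have disj: "closure Vs \<inter> (+) 1 ` closure Ws = {}"
      using closure_Vs_Dc closure_Ws_Bp Dc_TBp by blast
    have "interior (closure GG2) \<subseteq> interior (closure Vs) \<union> interior ((+) 1 ` closure Ws)"
      unfolding closure_G2 using disj by (intro int_Un_closed) (auto intro: closed_translation)
    then show ?thesis unfolding FF2_def r(3) Y1_def Y2_def interior_translation by auto
  qed
  show "\<forall>z\<in>interior_H FF2. \<forall>w\<in>interior_H FF2. z \<noteq> w \<longrightarrow> \<not> gequiv Gam z w"
  proof (intro ballI impI notI)
    fix z w assume z: "z \<in> interior_H FF2" and w: "w \<in> interior_H FF2" and ne: "z \<noteq> w"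
      and eq: "gequiv Gam z w"
    obtain M where M: "M \<in> Gam" "w = mobius M z" using eq by (auto simp: gequiv_def)
    have one: "(1::real) \<in> \<int>" "(-1::real) \<in> \<int>" by auto
    show False
    proof (cases "z \<in> Y1")
      case zY: True
      have zD: "z \<in> Do" using zY Y1D by blast
      have zuhp: "Im z > 0" using zD by (simp add: Do_def)
      show ?thesis
      proof (cases "w \<in> Y1")
        case True
        have wD: "w \<in> Do" using True Y1D by blast
        have "w = z" by (rule ne_Do[OF zD wD M(1) M(2)])
        then show ?thesis using ne by simp
      next
        case False
        then obtain w' where w': "w' \<in> Y2" "w = 1 + w'" using E w by blast
        have w'D: "w' \<in> Do" using w'(1) Y2D by blast
        have "mobius (Tm (-1) ** M) z = w - 1" using Tm_mult_left[OF M(1) zuhp one(2)] M by simp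
        then have eqm: "w' = mobius (Tm (-1) ** M) z" using w' by simp
        have "w' = z" by (rule ne_Do[OF zD w'D Gam_mult[OF Tm_Gam[OF one(2)] M(1)] eqm])
        then show ?thesis using Y12 zY w'(1) by blast
      qed
    next
      case zN: False
      then obtain z' where z': "z' \<in> Y2" "z = 1 + z'" using E z by blast
      have z'D: "z' \<in> Do" using z'(1) Y2D by blast
      have zuhp: "Im z' > 0" using z'D by (simp add: Do_def)
      have Mz: "mobius (M ** Tm 1) z' = w" using Tm_mult_right[OF M(1) zuhp one(1)] M z' by (simp add: add.commute)
      have MG: "M ** Tm 1 \<in> Gam" using Gam_mult[OF M(1) Tm_Gam[OF one(1)]] .
      show ?thesis
      proof (cases "w \<in> Y1")
        case True
        have wD: "w \<in> Do" using True Y1D by blast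
        have "w = z'" by (rule ne_Do[OF z'D wD MG Mz[symmetric]])
        then show ?thesis using Y12 True z'(1) by blast
      next
        case False
        then obtain w' where w': "w' \<in> Y2" "w = 1 + w'" using E w by blast
        have w'D: "w' \<in> Do" using w'(1) Y2D by blast
        have "mobius (Tm (-1) ** (M ** Tm 1)) z' = w - 1" using Tm_mult_left[OF MG zuhp one(2)] Mz by simp
        then have eqm: "w' = mobius (Tm (-1) ** (M ** Tm 1)) z'" using w' by simp
        have "w' = z'" by (rule ne_Do[OF z'D w'D Gam_mult[OF Tm_Gam[OF one(2)] MG] eqm])
        then show ?thesis using z' w' ne by simp
      qed
    qed
  qed
  show "\<forall>z\<in>uhp. \<exists>M\<in>Gam. mobius M z \<in> FF2"
  proof
    fix z assume "z \<in> uhp"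
    then obtain M where M: "M \<in> Gam" "mobius M z \<in> Dc" "Im (mobius M z) > 0"
      using covering_Dc by (auto simp: uhp_def)
    then have "mobius M z \<in> closure Do" using Dc_closure by (auto simp: uhp_def)
    moreover have "closure Do \<subseteq> closure Vs \<union> closure Ws"
      using closure_mono[OF Do_sub_VW] by (simp add: closure_Un)
    ultimately consider "mobius M z \<in> closure Vs" | "mobius M z \<in> closure Ws" by blast
    then show "\<exists>M\<in>Gam. mobius M z \<in> FF2"
    proof cases
      case 1
      then show ?thesis using M by (auto simp: FF2_def closure_H_def closure_G2 uhp_def)
    next
      case 2
      have one: "(1::real) \<in> \<int>" by simp
      have MG: "Tm 1 ** M \<in> Gam" by (rule Gam_mult[OF Tm_Gam[OF one] M(1)])
      have "mobius (Tm 1 ** M) z = 1 + mobius M z"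
        using Tm_mult_left[OF M(1) _ one] \<open>z \<in> uhp\<close> by (simp add: uhp_def add.commute)
      then have "mobius (Tm 1 ** M) z \<in> FF2" using 2 TclWs_uhp
        by (auto simp: FF2_def closure_H_def closure_G2)
      then show ?thesis using MG by blast
    qed
  qed
qed

lemma measures_differ: "hyp_area FF1 \<noteq> hyp_area FF2"
proof -
  have bor: "closed S \<Longrightarrow> S \<inter> uhp \<in> sets hyp_measure" for S
    by (simp add: hyp_measure_def borel_closed)
  have bor2: "closed S \<Longrightarrow> S \<in> sets hyp_measure" for S
    by (simp add: hyp_measure_def borel_closed)
  have fin: "hyp_area FF1 < \<infinity>"
  proof -
    have "hyp_area FF1 \<le> hyp_area (Dc \<inter> uhp)"
      unfolding hyp_area_def FF1_def closure_H_def using closure_Do closed_Dc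
      by (intro emeasure_mono bor) auto
    then show ?thesis using hyp_Dc_finite by simp
  qed
  have cW: "closed (closure Ws)" "closed ((+) 1 ` closure Ws)" by (auto intro: closed_translation)
  have F2eq: "FF2 = (closure Vs \<inter> uhp) \<union> (+) 1 ` closure Ws"
    unfolding FF2_def closure_H_def closure_G2 using TclWs_uhp by auto
  have disj: "(closure Vs \<inter> uhp) \<inter> (+) 1 ` closure Ws = {}"
    using closure_Vs_Dc closure_Ws_Bp Dc_TBp by blast
  have "hyp_area FF2 = hyp_area (closure Vs \<inter> uhp) + hyp_area ((+) 1 ` closure Ws)"
    unfolding F2eq hyp_area_def using disj cW
    by (intro plus_emeasure[symmetric] bor bor2) auto
  also have "hyp_area ((+) 1 ` closure Ws) = hyp_area (closure Ws)"
    using hyp_area_transl[of "closure Ws"] cW by (simp add: borel_closed)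
  also have "hyp_area (closure Vs \<inter> uhp) + hyp_area (closure Ws) =
      hyp_area ((closure Vs \<inter> uhp) \<union> closure Ws) + hyp_area ((closure Vs \<inter> uhp) \<inter> closure Ws)"
    unfolding hyp_area_def by (intro emeasure_Un_Int bor bor2) auto
  finally have eq: "hyp_area FF2 = hyp_area ((closure Vs \<inter> uhp) \<union> closure Ws) + hyp_area ((closure Vs \<inter> uhp) \<inter> closure Ws)" .
  have "FF1 \<subseteq> (closure Vs \<inter> uhp) \<union> closure Ws"
  proof -
    have "closure Do \<subseteq> closure Vs \<union> closure Ws"
      using closure_mono[OF Do_sub_VW] by (simp add: closure_Un)
    then show ?thesis by (auto simp: FF1_def closure_H_def)
  qed
  moreover have "(closure Vs \<inter> uhp) \<union> closure Ws \<in> sets hyp_measure"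
    by (intro sets.Un bor bor2) auto
  ultimately have a1: "hyp_area FF1 \<le> hyp_area ((closure Vs \<inter> uhp) \<union> closure Ws)"
    unfolding hyp_area_def by (rule emeasure_mono)
  have "K2 \<subseteq> (closure Vs \<inter> uhp) \<inter> closure Ws"
    using K2_closure_V K2_sub B0_def by (force simp: cbox_complex_eq uhp_def B0_def)
  moreover have "(closure Vs \<inter> uhp) \<inter> closure Ws \<in> sets hyp_measure"
    by (intro sets.Int bor bor2) auto
  ultimately have a2: "hyp_area K2 \<le> hyp_area ((closure Vs \<inter> uhp) \<inter> closure Ws)"
    unfolding hyp_area_def by (rule emeasure_mono)
  have "hyp_area FF1 < hyp_area FF1 + hyp_area K2" using fin hyp_K2_pos by simp
  also have "\<dots> \<le> hyp_area FF2" unfolding eq using a1 a2 by (rule add_mono)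
  finally show ?thesis by simp
qed

theorem proposition4:
  shows "(\<exists>\<Gamma> F1 F2. fuchsian \<Gamma> \<and> hyp_area F1 \<noteq> hyp_area F2 \<and>
            (\<forall>F\<in>{F1, F2}. F \<subseteq> uhp \<and>
               closedin (top_of_set uhp) F \<and>
               (\<forall>z\<in>interior_H F. \<forall>w\<in>interior_H F. z \<noteq> w \<longrightarrow> \<not> gequiv \<Gamma> z w) \<and>
               (\<forall>z\<in>uhp. \<exists>M\<in>\<Gamma>. mobius M z \<in> F) \<and>
               F = closure_H (interior_H F)))
       \<and>
       (\<exists>\<Gamma> F1 F2. fuchsian \<Gamma> \<and> hyp_area F1 \<noteq> hyp_area F2 \<and>
            (\<forall>F\<in>{F1, F2}. F \<subseteq> uhp \<and>
               F = closure_H (interior_H F) \<and>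
               (\<exists>G. open G \<and> G \<subseteq> uhp \<and> F = closure_H G \<and>
                  (\<forall>z\<in>G. \<forall>w\<in>G. z \<noteq> w \<longrightarrow> \<not> gequiv \<Gamma> z w) \<and>
                  (\<forall>z\<in>uhp. \<exists>M\<in>\<Gamma>. mobius M z \<in> F))))"
proof -
  have good: "\<forall>F\<in>{FF1, FF2}. F \<subseteq> uhp \<and>
               closedin (top_of_set uhp) F \<and>
               (\<forall>z\<in>interior_H F. \<forall>w\<in>interior_H F. z \<noteq> w \<longrightarrow> \<not> gequiv Gam z w) \<and>
               (\<forall>z\<in>uhp. \<exists>M\<in>Gam. mobius M z \<in> F) \<and>
               F = closure_H (interior_H F)"
    using F1_good F2_good by auto
  have good2: "\<forall>F\<in>{FF1, FF2}. F \<subseteq> uhp \<and>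
               F = closure_H (interior_H F) \<and>
               (\<exists>G. open G \<and> G \<subseteq> uhp \<and> F = closure_H G \<and>
                  (\<forall>z\<in>G. \<forall>w\<in>G. z \<noteq> w \<longrightarrow> \<not> gequiv Gam z w) \<and>
                  (\<forall>z\<in>uhp. \<exists>M\<in>Gam. mobius M z \<in> F))"
  proof
    fix F assume "F \<in> {FF1, FF2}"
    then have g: "F \<subseteq> uhp" "F = closure_H (interior_H F)"
      "\<forall>z\<in>interior_H F. \<forall>w\<in>interior_H F. z \<noteq> w \<longrightarrow> \<not> gequiv Gam z w"
      "\<forall>z\<in>uhp. \<exists>M\<in>Gam. mobius M z \<in> F" using good by auto
    have "open (interior_H F)" "interior_H F \<subseteq> uhp"
      unfolding interior_H_def using interior_subset by auto
    then show "F \<subseteq> uhp \<and> F = closure_H (interior_H F) \<and>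
               (\<exists>G. open G \<and> G \<subseteq> uhp \<and> F = closure_H G \<and>
                  (\<forall>z\<in>G. \<forall>w\<in>G. z \<noteq> w \<longrightarrow> \<not> gequiv Gam z w) \<and>
                  (\<forall>z\<in>uhp. \<exists>M\<in>Gam. mobius M z \<in> F))"
      using g by blast
  qed
  show ?thesis using good good2 fuchsian_Gam measures_differ by blast
qed


end
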